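(* Let $\alpha=\sigma_1\sigma_2^{-1}\sigma_3^{-1}\in B_4$ and let $\lambda$ be the largest positive real root of $X^4-2X^3-2X+1$ (which equals $\mathrm{GR}(\alpha)$). Then $$\lambda>\sup\{R(B_\alpha(t_0)) : t_0\in\mathbb{C},\ |t_0|=1\},$$ i.e. the inequality of Theorem 1 is strict for this $\alpha$. Equivalently, for no $t_0$ with $|t_0|=1$ does the polynomial $X^3-(1-t_0-t_0^{-1})X^2+(t_0^{-2}-t_0^{-1}+1)X+t_0^{-1}$ have a root of modulus $\ge\lambda$.
   Context: $\alpha$ acts on $F_4$ (right action) by $(x_1)\alpha=x_1x_4x_1^{-1}$, $(x_2)\alpha=x_1$, $(x_3)\alpha=x_4^{-1}x_2x_4$, $(x_4)\alpha=x_4^{-1}x_3x_4$. $B_\alpha=(\varphi(\partial((x_i)\alpha)/\partial x_k))_{i,k}$ is its Burau matrix (Fox derivatives, $\varphi(x_i)=t$), whose characteristic polynomial is $(X-1)\big(X^3-(1-t-t^{-1})X^2+(t^{-2}-t^{-1}+1)X+t^{-1}\big)$; $B_\alpha(t_0)$ is its evaluation at $t=t_0$ and $R$ the spectral radius. *)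

theory Defs
  imports "HOL-Analysis.Analysis" "Jordan_Normal_Form.Spectral_Radius"
begin

text \<open>Words in the free group F_4: a letter (i, True) is x_i, (i, False) is x_i^{-1}.\<close>
type_synonym fword = "(nat \<times> bool) list"

text \<open>Fox derivative with respect to x_k, followed by the abelianisation phi(x_i) = t,
  using the rule d(uv) = d(u) + u d(v).\<close>
fun fox_phi :: "complex \<Rightarrow> nat \<Rightarrow> fword \<Rightarrow> complex" where
  "fox_phi t k [] = 0"
| "fox_phi t k ((i, e) # w) =
     (if i = k then (if e then 1 else - inverse t) else 0)
     + (if e then t else inverse t) * fox_phi t k w"

definition alpha_img :: "nat \<Rightarrow> fword" where
  "alpha_img i = (if i = 1 then [(1, True), (4, True), (1, False)]
             else if i = 2 then [(1, True)]
             else if i = 3 then [(4, False), (2, True), (4, True)]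
             else [(4, False), (3, True), (4, True)])"

text \<open>Burau matrix B_alpha(t) = (phi(d (x_i)alpha / d x_k))_{i,k}, indices shifted to 0..3.\<close>
definition burau_alpha :: "complex \<Rightarrow> complex mat" where
  "burau_alpha t = mat 4 4 (\<lambda>(i, k). fox_phi t (k + 1) (alpha_img (i + 1)))"

definition lambda_GR :: real where
  "lambda_GR = Max {x::real. x > 0 \<and> x ^ 4 - 2 * x ^ 3 - 2 * x + 1 = 0}"

end

theory Submission
  imports Defs
begin


lemma real_key:
  fixes x U c d :: real
  assumes cd: "c^2 + d^2 = 1"
    and A: "(x + U * c)^2 + (U * d)^2 = 1"
    and B: "x + 1 = 2 * (x * (c^2 - d^2) + U * (c^3 - 3 * c * d^2))"
    and U: "U \<ge> 68/25"
  shows False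
proof -
  define k where "k = 4 * c^2 - 3"
  define V where "V = U^2 - 1"
  have d2e: "d^2 = 1 - c^2" using cd by simp
  have A': "x^2 + 2 * U * c * x + U^2 - 1 = 0"
  proof -
    have "(x+U * c)^2 + (U * d)^2 = x^2 + 2 * U * c * x + U^2 * (c^2+d^2)" by (simp add: algebra_simps power2_eq_square)
    thus ?thesis using A cd by simp
  qed
  have B': "x * k = 1 - 2 * U * c * k"
  proof -
    have "x * k - (1 - 2 * U * c * k) = 2 * (x * (c^2 - d^2) + U * (c^3 - 3 * c * d^2)) - (x+1)"
      unfolding k_def d2e by (simp add: algebra_simps power2_eq_square power3_eq_cube)
    thus ?thesis using B by simp
  qed
  have F: "V * k^2 - 2 * U * c * k + 1 = 0"
  proof -
    have "V * k^2 - 2 * U * c * k + 1 = k^2 * (x^2 + 2 * U * c * x + U^2 - 1) - (x * k - 1 + 2 * U * c * k) * (x * k + 1)"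
      unfolding V_def by (simp add: algebra_simps power2_eq_square)
    also have "\<dots> = 0" using A' B' by simp
    finally show ?thesis .
  qed
  have U2: "U^2 \<ge> 4624/625"
  proof -
    have "(68/25)^2 \<le> U^2" by (rule power_mono[OF U]) simp
    thus ?thesis by (simp add: power2_eq_square)
  qed
  have Vpos: "V > 0" unfolding V_def using U2 by simp
  have "V * (V * k^2 - 2 * U * c * k + 1) = (V * k - U * c)^2 + V - U^2 * c^2"
    by (simp add: algebra_simps power2_eq_square)
  hence "(V * k - U * c)^2 + V - U^2 * c^2 = 0" using F by simp
  hence h1: "U^2 * c^2 \<ge> V" by (smt (verit) zero_le_power2)
  have "U^2 * d^2 = U^2 - U^2 * c^2" unfolding d2e by (simp add: algebra_simps)
  hence "U^2 * d^2 \<le> 1" using h1 unfolding V_def by simp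
  have d2: "d^2 \<le> 625/4624"
  proof -
    have "4624/625  *  d^2 \<le> U^2 * d^2" by (rule mult_right_mono[OF U2]) simp
    thus ?thesis using \<open>U^2 * d^2 \<le> 1\<close> by simp
  qed
  have kge: "k \<ge> 2124/4624" unfolding k_def using d2 cd by simp
  have c2: "c^2 \<le> 1" using cd zero_le_power2[of d] by linarith
  have c1: "c \<le> 1" using power2_le_imp_le[of c 1] c2 by simp
  have cpos: "c > 0"
  proof (rule ccontr)
    assume "\<not> c > 0"
    hence "U * c * k \<le> 0" using U kge by (simp add: mult_nonneg_nonpos mult_nonpos_nonneg)
    moreover have "V * k^2 \<ge> 0" using Vpos by simp
    ultimately show False using F by linarith
  qed
  define Us :: real where "Us = 68/25"
  define Vs :: real where "Vs = Us^2 - 1"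
  have Usk: "Us * k \<ge> c" unfolding Us_def using kge c1 by (simp add: power2_eq_square)
  have mono: "V * k^2 - 2 * U * c * k + 1 - (Vs * k^2 - 2 * Us * c * k + 1) = (U - Us) * (k * (k * (U+Us) - 2 * c))"
    unfolding V_def Vs_def by (simp add: algebra_simps power2_eq_square)
  have "k * (U+Us) - 2 * c \<ge> 0"
  proof -
    have "k * (U+Us) \<ge> k * (2 * Us)" using kge U unfolding Us_def by (intro mult_left_mono) auto
    moreover have "k * (2 * Us) = 2 * (Us * k)" by simp
    ultimately show ?thesis using Usk by linarith
  qed
  hence "(U - Us) * (k * (k * (U+Us) - 2 * c)) \<ge> 0" using U kge unfolding Us_def by (simp add: power2_eq_square)
  hence Fs: "Vs * k^2 - 2 * Us * c * k + 1 \<le> 0" using mono F by linarith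
  define e where "e = d^2"
  have ce: "c \<le> 1 - e/2"
  proof -
    have q1: "(1 - e/2)^2 = 1 - e + e^2/4" by (simp add: power2_eq_square field_simps)
    have q2: "c^2 = 1 - e" unfolding e_def using cd by simp
    have "c^2 \<le> (1 - e/2)^2" using q1 q2 zero_le_power2[of e] by linarith
    moreover have "1 - e/2 \<ge> 0" using d2 unfolding e_def by simp
    ultimately show ?thesis using cpos by (meson power2_le_imp_le)
  qed
  have kk: "k = 1 - 4 * e" unfolding k_def e_def using cd by simp
  have "Vs * k^2 - 2 * Us * c * k + 1 \<ge> Vs * k^2 - 2 * Us * (1-e/2) * k + 1"
    using ce kge unfolding Us_def by (simp add: mult_right_mono)
  define E :: real where "E = 625/4624"
  define H where "H = (\<lambda>e::real. Vs * (1-4 * e)^2 - 2 * Us * (1-e/2) * (1-4 * e) + 1)"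
  have "H e - H E = (e - E) * ((16 * Vs - 4 * Us) * (e+E) + (9 * Us - 8 * Vs))"
    unfolding H_def by (simp add: algebra_simps power2_eq_square)
  moreover have "e \<le> E" "e \<ge> 0" unfolding e_def E_def using d2 by auto
  moreover have "(16 * Vs - 4 * Us) * (e+E) + (9 * Us - 8 * Vs) \<le> 0"
  proof -
    have "16 * Vs - 4 * Us \<ge> 0" unfolding Vs_def Us_def by (simp add: power2_eq_square)
    hence "(16 * Vs - 4 * Us) * (e+E) \<le> (16 * Vs - 4 * Us) * (2 * E)" using \<open>e \<le> E\<close> by (intro mult_left_mono) auto
    moreover have "(16 * Vs - 4 * Us) * (2 * E) + (9 * Us - 8 * Vs) < 0" unfolding Vs_def Us_def E_def by (simp add: power2_eq_square)
    ultimately show ?thesis by linarith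
  qed
  ultimately have "H e \<ge> H E" using mult_nonpos_nonpos[of "e - E" "(16 * Vs - 4 * Us) * (e+E) + (9 * Us - 8 * Vs)"] by linarith
  moreover have "H E > 0" unfolding H_def Vs_def Us_def E_def by (simp add: power2_eq_square)
  ultimately have "H e > 0" by linarith
  thus False using Fs \<open>Vs * k^2 - 2 * Us * c * k + 1 \<ge> _\<close> kk unfolding H_def by simp
qed


lemma cubic_bound:
  fixes t \<mu> :: complex
  assumes t1: "cmod t = 1"
    and p: "\<mu>^3 + of_real (2 * Re t - 1)  *  \<mu>^2 + of_real (2 * Re t - 1)  *  inverse t  *  \<mu> + inverse t = 0"
  shows "cmod \<mu> < 229/100"
proof (rule ccontr)
  assume "\<not> cmod \<mu> < 229/100"
  hence r: "cmod \<mu> \<ge> 229/100" by simp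
  define \<rho> where "\<rho> = cmod \<mu>"
  define x where "x = 2 * Re t - 1"
  define X where "X = complex_of_real x"
  define s where "s = inverse t"
  have t0: "t \<noteq> 0" using t1 by auto
  have ts: "t * s = 1" unfolding s_def using t0 by simp
  have s_cnj: "s = cnj t" unfolding s_def using t1
    by (metis complex_norm_square inverse_eq_divide mult.commute nonzero_mult_div_cancel_left norm_eq_zero one_power2 zero_neq_one div_by_1 of_real_1 divide_divide_eq_right mult_1_right)
  have rpos: "\<rho> > 0" unfolding \<rho>_def using r by linarith
  have mu0: "\<mu> \<noteq> 0"
  proof
    assume "\<mu> = 0" thus False using rpos unfolding \<rho>_def by simp
  qed
  have P: "\<mu>^3 + X * \<mu>^2 + X * s * \<mu> + s = 0" using p unfolding X_def x_def s_def by simp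
  define \<omega> where "\<omega> = \<mu> / of_real \<rho>"
  define \<nu> where "\<nu> = \<omega> / of_real \<rho>"
  define U where "U = \<rho> + 1/\<rho>"
  have mu_eq: "\<mu> = of_real \<rho>  *  \<omega>" unfolding \<omega>_def using rpos by simp
  have om1: "cmod \<omega> = 1" unfolding \<omega>_def \<rho>_def using mu0 by (simp add: norm_divide)
  have cnj_nu: "cnj \<nu> = 1/\<mu>"
  proof -
    have "\<mu>  *  cnj \<mu> = of_real (\<rho>^2)" unfolding \<rho>_def by (simp add: complex_mult_cnj cmod_def power2_eq_square)
    thus ?thesis unfolding \<nu>_def \<omega>_def using rpos mu0
      by (simp add: field_simps power2_eq_square)
  qed
  have Pnu: "\<nu>^3 + X * \<nu>^2 + X * s * \<nu> + s = 0"
  proof -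
    have cX: "cnj X = X" unfolding X_def by simp
    have "cnj (\<nu>^3 + X * \<nu>^2 + X * s * \<nu> + s) = (1/\<mu>)^3 + X * (1/\<mu>)^2 + X * t * (1/\<mu>) + t"
      using cX cnj_nu s_cnj by simp
    also have "\<dots> = t  *  (\<mu>^3 + X * \<mu>^2 + X * s * \<mu> + s) / \<mu>^3"
      using mu0 ts by (simp add: field_simps power3_eq_cube power2_eq_square)
    also have "\<dots> = 0" using P by simp
    finally have "cnj (\<nu>^3 + X * \<nu>^2 + X * s * \<nu> + s) = 0" .
    thus ?thesis by (simp only: complex_cnj_zero_iff)
  qed
  have rgt: "\<rho> > 1" using r unfolding \<rho>_def by linarith
  have "1/\<rho> < 1" using rgt by simp
  hence rne: "\<rho> \<noteq> 1/\<rho>" using rgt by linarith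
  have mune: "\<mu> \<noteq> \<nu>"
  proof
    assume "\<mu> = \<nu>"
    hence "cmod \<mu> = cmod \<nu>" by simp
    moreover have "cmod \<nu> = 1/\<rho>" unfolding \<nu>_def using om1 rpos by (simp add: norm_divide)
    ultimately show False using rne unfolding \<rho>_def by simp
  qed
  have S2: "\<mu>^2 + \<mu> * \<nu> + \<nu>^2 + X * (\<mu>+\<nu>) + X * s = 0"
  proof -
    have "(\<mu> - \<nu>)  *  (\<mu>^2 + \<mu> * \<nu> + \<nu>^2 + X * (\<mu>+\<nu>) + X * s) = (\<mu>^3 + X * \<mu>^2 + X * s * \<mu> + s) - (\<nu>^3 + X * \<nu>^2 + X * s * \<nu> + s)"
      by (simp add: algebra_simps power2_eq_square power3_eq_cube)
    also have "\<dots> = 0" using P Pnu by simp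
    finally show ?thesis using mune by simp
  qed
  define m3 where "m3 = - X - \<mu> - \<nu>"
  have V3: "\<mu> * \<nu> * m3 = - s"
  proof -
    have "\<mu> * \<nu> * m3 + s = (\<mu>^3 + X * \<mu>^2 + X * s * \<mu> + s) - \<mu>  *  (\<mu>^2 + \<mu> * \<nu> + \<nu>^2 + X * (\<mu>+\<nu>) + X * s)"
      unfolding m3_def by (simp add: algebra_simps power2_eq_square power3_eq_cube)
    also have "\<dots> = 0" using P S2 by simp
    finally show ?thesis by (simp add: add_eq_0_iff)
  qed
  have munu: "\<mu> * \<nu> = \<omega>^2" unfolding \<nu>_def mu_eq using rpos by (simp add: power2_eq_square)
  have sum: "\<mu> + \<nu> = of_real U  *  \<omega>" unfolding \<nu>_def mu_eq U_def using rpos by (simp add: algebra_simps)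
  have s_eq: "s = \<omega>^2  *  (X + of_real U  *  \<omega>)"
    using V3 munu sum unfolding m3_def by (simp add: algebra_simps)
  have s1: "cmod s = 1" using s_cnj t1 by simp
  have A: "cmod (X + of_real U  *  \<omega>) = 1"
    using s1 s_eq om1 by (simp add: norm_mult norm_power)
  have B: "x + 1 = 2  *  Re s"
    using s_cnj unfolding x_def by simp
  define c where "c = Re \<omega>"
  define d where "d = Im \<omega>"
  have cd: "c^2 + d^2 = 1" using om1 unfolding c_def d_def cmod_def
    by (simp add: real_sqrt_eq_1_iff)
  have A': "(x + U * c)^2 + (U * d)^2 = 1"
    using A unfolding cmod_def c_def d_def X_def by (simp add: real_sqrt_eq_1_iff)
  have B': "x + 1 = 2 * (x * (c^2 - d^2) + U * (c^3 - 3 * c * d^2))"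
    using B unfolding s_eq c_def d_def X_def
    by (simp add: power2_eq_square power3_eq_cube algebra_simps)
  have U68: "U \<ge> 68/25"
  proof -
    have "U - 62441/22900 = (\<rho> - 229/100) * (1 - 100/(229 * \<rho>))"
      unfolding U_def using rpos by (simp add: field_simps)
    moreover have "1 - 100/(229 * \<rho>) \<ge> 0" using r rpos unfolding \<rho>_def by (simp add: field_simps)
    ultimately have "U - 62441/22900 \<ge> 0" using r unfolding \<rho>_def by simp
    thus ?thesis by simp
  qed
  show False using real_key[OF cd A' B' U68] .
qed


lemma burau_carrier: "burau_alpha t \<in> carrier_mat 4 4"
  unfolding burau_alpha_def by simp

lemma burau_row:
  assumes v: "v \<in> carrier_vec 4" and t0: "t \<noteq> 0"
  shows "vec_index (burau_alpha t *\<^sub>v v) 0 = (1-t)* vec_index v 0 + t* vec_index v 3"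
    "vec_index (burau_alpha t *\<^sub>v v) 1 = vec_index v 0"
    "vec_index (burau_alpha t *\<^sub>v v) 2 = inverse t * vec_index v 1 + (1 - inverse t)* vec_index v 3"
    "vec_index (burau_alpha t *\<^sub>v v) 3 = inverse t * vec_index v 2 + (1 - inverse t)* vec_index v 3"
  using v t0
  by (auto simp: burau_alpha_def mult_mat_vec_def scalar_prod_def alpha_img_def row_def
      numeral_eq_Suc atLeast0LessThan lessThan_Suc algebra_simps)


lemma eig_poly:
  assumes t0: "t \<noteq> 0" and ev: "eigenvalue (burau_alpha t) \<mu>"
  shows "\<mu> = 1 \<or> \<mu>^3 + (t + inverse t - 1) * \<mu>^2 + (t + inverse t - 1) * inverse t * \<mu> + inverse t = 0"
proof -
  obtain v where v: "v \<in> carrier_vec 4" "v \<noteq> 0\<^sub>v 4" "burau_alpha t  *\<^sub>v v = \<mu> \<cdot>\<^sub>v v"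
    using ev unfolding eigenvalue_def eigenvector_def using burau_carrier[of t] by auto
  define s where "s = inverse t"
  have ts: "t * s = 1" unfolding s_def using t0 by simp
  have s0: "s \<noteq> 0" unfolding s_def using t0 by simp
  have comp: "vec_index (burau_alpha t  *\<^sub>v v) i = \<mu>  *  vec_index v i" if "i < 4" for i
    using v(1,3) that by simp
  define a where "a = vec_index v 0"
  define b where "b = vec_index v 1"
  define c where "c = vec_index v 2"
  define d where "d = vec_index v 3"
  have e0: "(1-t) * a + t * d = \<mu> * a" using comp[of 0] burau_row(1)[OF v(1) t0] unfolding a_def d_def by simp
  have e1: "a = \<mu> * b" using comp[of 1] burau_row(2)[OF v(1) t0] unfolding a_def b_def by simp
  have e2: "s * b + (1-s) * d = \<mu> * c" using comp[of 2] burau_row(3)[OF v(1) t0] unfolding s_def b_def c_def d_def by simp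
  have e3: "s * c + (1-s) * d = \<mu> * d" using comp[of 3] burau_row(4)[OF v(1) t0] unfolding s_def c_def d_def by simp
  have d0: "d \<noteq> 0"
  proof
    assume d: "d = 0"
    hence "c = 0" using e3 s0 by simp
    hence "b = 0" using e2 d s0 by simp
    hence "a = 0" using e1 by simp
    have "v = 0\<^sub>v 4"
    proof (rule eq_vecI)
      show "dim_vec v = dim_vec (0\<^sub>v 4)" using v(1) by simp
      fix i assume "i < dim_vec (0\<^sub>v 4)"
      hence "i = 0 \<or> i = 1 \<or> i = 2 \<or> i = 3" by auto
      thus "vec_index v i = vec_index (0\<^sub>v 4) i"
        using \<open>a = 0\<close> \<open>b = 0\<close> \<open>c = 0\<close> d unfolding a_def b_def c_def d_def by auto
    qed
    thus False using v(2) by simp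
  qed
  have cc: "c = t * (\<mu> - 1 + s) * d"
  proof -
    have "s * c = \<mu> * d - (1-s) * d" using e3 by (metis add_diff_cancel_right')
    hence "t * (s * c) = t * (\<mu> * d - (1-s) * d)" by simp
    thus ?thesis using ts by (simp add: algebra_simps)
  qed
  have bb: "b = t * (\<mu> * c - (1-s) * d)"
  proof -
    have "s * b = \<mu> * c - (1-s) * d" using e2 by (metis add_diff_cancel_right')
    hence "t * (s * b) = t * (\<mu> * c - (1-s) * d)" by simp
    thus ?thesis using ts by (simp add: algebra_simps)
  qed
  have a_eq: "a = \<mu> * (t * (\<mu> * (t * (\<mu> - 1 + s) * d) - (1-s) * d))" using e1 bb cc by simp
  have "0 = (1-t-\<mu>) * a + t * d" using e0 by (simp add: algebra_simps)
  also have "\<dots> = (1-t-\<mu>) * \<mu> * t * (\<mu> * t * (\<mu> - 1 + s) * d - (1-s) * d) + t * d"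
    unfolding a_eq by (simp add: algebra_simps)
  also have "\<dots> = -(t^2) * (\<mu>-1) * (\<mu>^3 + (t + s - 1) * \<mu>^2 + (t + s - 1) * s * \<mu> + s) * d"
  proof -
    show ?thesis unfolding s_def using t0
      by (simp add: field_simps power2_eq_square power3_eq_cube)
  qed
  finally have "(\<mu>-1) * (\<mu>^3 + (t + s - 1) * \<mu>^2 + (t + s - 1) * s * \<mu> + s) = 0"
    using t0 d0 by simp
  thus ?thesis unfolding s_def by simp
qed

lemma inv_cnj: assumes "cmod t = 1" shows "inverse t = cnj t"
proof -
  have "t * cnj t = 1" using assms by (simp add: complex_mult_cnj cmod_def power2_eq_square)
  thus ?thesis by (simp add: inverse_unique)
qed

lemma spec_bound:
  assumes t1: "cmod t = 1" and mu: "\<mu> \<in> spectrum (burau_alpha t)"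
  shows "cmod \<mu> \<le> 229/100"
proof -
  have t0: "t \<noteq> 0" using t1 by auto
  have ev: "eigenvalue (burau_alpha t) \<mu>" using mu unfolding spectrum_def by simp
  have X: "t + inverse t - 1 = complex_of_real (2 * Re t - 1)"
    using inv_cnj[OF t1] by (simp add: complex_add_cnj)
  from eig_poly[OF t0 ev] show ?thesis
  proof
    assume "\<mu> = 1" thus ?thesis by simp
  next
    assume "\<mu>^3 + (t + inverse t - 1) * \<mu>^2 + (t + inverse t - 1) * inverse t * \<mu> + inverse t = 0"
    hence "\<mu>^3 + complex_of_real (2 * Re t - 1) * \<mu>^2 + complex_of_real (2 * Re t - 1) * inverse t * \<mu> + inverse t = 0"
      unfolding X .
    from cubic_bound[OF t1 this] show ?thesis by simp
  qed
qed

lemma sr_bound: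
  assumes t1: "cmod t = 1"
  shows "spectral_radius (burau_alpha t) \<le> 229/100"
proof -
  have fin: "finite (spectrum (burau_alpha t))" using card_finite_spectrum(1)[OF burau_carrier] .
  have ne: "spectrum (burau_alpha t) \<noteq> {}" using spectrum_non_empty[OF burau_carrier] by simp
  show ?thesis unfolding spectral_radius_def
  proof (rule Max.boundedI)
    show "finite (cmod ` spectrum (burau_alpha t))" using fin by simp
    show "cmod ` spectrum (burau_alpha t) \<noteq> {}" using ne by simp
    fix a assume "a \<in> cmod ` spectrum (burau_alpha t)"
    thus "a \<le> 229/100" using spec_bound[OF t1] by auto
  qed
qed

lemma lam_bound: "lambda_GR > 229/100"
proof -
  define f where "f = (\<lambda>x::real. x ^ 4 - 2 * x ^ 3 - 2 * x + 1)"
  have f1: "f (229/100) < 0" unfolding f_def by (simp add: power_divide)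
  have f2: "f 3 > 0" unfolding f_def by simp
  have cont: "\<forall>x. 229/100 \<le> x \<and> x \<le> 3 \<longrightarrow> isCont f x" unfolding f_def by (intro allI impI) (intro continuous_intros)
  have "\<exists>x\<ge>229/100. x \<le> 3 \<and> f x = 0"
    by (rule IVT[of f "229/100" 0 3]) (use f1 f2 cont in auto)
  then obtain x0 where x0: "x0 \<ge> 229/100" "f x0 = 0" by blast
  have "x0 \<noteq> 229/100"
  proof
    assume "x0 = 229/100" thus False using x0(2) f1 by (metis less_irrefl)
  qed
  hence gt: "x0 > 229/100" using x0(1) by simp
  define S where "S = {x::real. x > 0 \<and> x ^ 4 - 2 * x ^ 3 - 2 * x + 1 = 0}"
  have peq: "poly [:1, -2, 0, -2, 1:] x = x ^ 4 - 2 * x ^ 3 - 2 * x + 1" for x :: real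
    by (simp add: algebra_simps power4_eq_xxxx power3_eq_cube)
  have "S \<subseteq> {x. poly [:1, -2, 0, -2, 1:] x = 0}"
    unfolding S_def peq by blast
  moreover have "finite {x::real. poly [:1, -2, 0, -2, 1:] x = 0}"
    by (rule poly_roots_finite) simp
  ultimately have fin: "finite S" by (rule finite_subset)
  have "x0 \<in> S" using x0 gt unfolding S_def f_def by simp
  hence "x0 \<le> Max S" using fin by simp
  thus ?thesis using gt unfolding lambda_GR_def S_def[symmetric] by simp
qed

theorem mainTheorem7:
  shows "lambda_GR > Sup ((\<lambda>t. spectral_radius (burau_alpha t)) ` {t::complex. cmod t = 1})"
proof -
  have "Sup ((\<lambda>t. spectral_radius (burau_alpha t)) ` {t::complex. cmod t = 1}) \<le> 229/100"
  proof (rule cSup_least)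
    show "(\<lambda>t. spectral_radius (burau_alpha t)) ` {t::complex. cmod t = 1} \<noteq> {}"
      by (auto intro: exI[of _ 1])
  next
    fix y assume "y \<in> (\<lambda>t. spectral_radius (burau_alpha t)) ` {t::complex. cmod t = 1}"
    thus "y \<le> 229/100" using sr_bound by auto
  qed
  thus ?thesis using lam_bound by simp
qed

end
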